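(* Let $N\ge2$ and $\alpha\in\mathbb{C}^N$. The set $\mathcal{M}_{N,\infty}$ is dense in $\mathbb{C}$ if and only if $\mathbb{Z}+\alpha_1\mathbb{Z}+\cdots+\alpha_N\mathbb{Z}$ is dense in $\mathbb{C}$.
   Context: For $(\tau,\xi)\in\mathbb{Z}\times\mathbb{Z}^N$ write $|(\tau,\xi)|=|\tau|+|\xi_1|+\cdots+|\xi_N|$ and, for $\lambda\in\mathbb{C}$, $\rho_\lambda(\tau,\xi)=\tau+\alpha_1\xi_1+\cdots+\alpha_N\xi_N-\lambda$. For $j\in\mathbb{N}$ let $\mathcal{M}_N(j)=\bigcup_{(\tau,\xi)\in\mathbb{Z}\times\mathbb{Z}^N,\ |(\tau,\xi)|>1}\{\lambda\in\mathbb{C}: |\rho_\lambda(\tau,\xi)|<|(\tau,\xi)|^{-j}\}$, and $\mathcal{M}_{N,\infty}=\bigcap_{j\in\mathbb{N}}\mathcal{M}_N(j)$. *)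

theory Defs
  imports "HOL-Analysis.Analysis"
begin

text \<open>Integer points (tau, xi) of Z x Z^N: xi is an integer function supported on {1..N}.\<close>
definition lattice_pts :: "nat \<Rightarrow> (int \<times> (nat \<Rightarrow> int)) set" where
  "lattice_pts N = {(t, xi). \<forall>i. i \<notin> {1..N} \<longrightarrow> xi i = 0}"

definition pt_norm :: "nat \<Rightarrow> int \<times> (nat \<Rightarrow> int) \<Rightarrow> int" where
  "pt_norm N p = \<bar>fst p\<bar> + (\<Sum>i=1..N. \<bar>snd p i\<bar>)"

definition rho :: "nat \<Rightarrow> (nat \<Rightarrow> complex) \<Rightarrow> complex \<Rightarrow> int \<times> (nat \<Rightarrow> int) \<Rightarrow> complex" where
  "rho N \<alpha> lam p = of_int (fst p) + (\<Sum>i=1..N. \<alpha> i * of_int (snd p i)) - lam"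

definition M_set :: "nat \<Rightarrow> (nat \<Rightarrow> complex) \<Rightarrow> nat \<Rightarrow> complex set" where
  "M_set N \<alpha> j = (\<Union>p\<in>{p \<in> lattice_pts N. pt_norm N p > 1}.
      {lam. norm (rho N \<alpha> lam p) < real_of_int (pt_norm N p) powr (- real j)})"

definition M_inf :: "nat \<Rightarrow> (nat \<Rightarrow> complex) \<Rightarrow> complex set" where
  "M_inf N \<alpha> = (\<Inter>j\<in>{1..}. M_set N \<alpha> j)"

definition lattice_grp :: "nat \<Rightarrow> (nat \<Rightarrow> complex) \<Rightarrow> complex set" where
  "lattice_grp N \<alpha> = {of_int t + (\<Sum>i=1..N. \<alpha> i * of_int (xi i)) | t xi. True}"

end

theory Submission
  imports Defs "HOL-Library.FuncSet"
begin

definition vval :: "nat \<Rightarrow> (nat \<Rightarrow> complex) \<Rightarrow> int \<times> (nat \<Rightarrow> int) \<Rightarrow> complex" where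
  "vval N \<alpha> p = of_int (fst p) + (\<Sum>i=1..N. \<alpha> i * of_int (snd p i))"

lemma rho_vval: "rho N \<alpha> lam p = vval N \<alpha> p - lam"
  by (simp add: rho_def vval_def)

lemma vval_in_grp: "vval N \<alpha> p \<in> lattice_grp N \<alpha>"
  unfolding vval_def lattice_grp_def by blast

lemma pt_norm_nonneg: "pt_norm N p \<ge> 0"
  unfolding pt_norm_def by (simp add: sum_nonneg)

lemma small_finite: "finite {p \<in> lattice_pts N. pt_norm N p \<le> 1}"
proof -
  let ?f = "\<lambda>(t::int, f::nat\<Rightarrow>int). (t, \<lambda>i. if i \<in> {1..N} then f i else 0)"
  have "{p \<in> lattice_pts N. pt_norm N p \<le> 1} \<subseteq> ?f ` ({-1..1} \<times> (PiE {1..N} (\<lambda>_. {-1..1})))"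
  proof
    fix p assume p: "p \<in> {p \<in> lattice_pts N. pt_norm N p \<le> 1}"
    obtain t xi where pe: "p = (t, xi)" by fastforce
    have z: "\<forall>i. i \<notin> {1..N} \<longrightarrow> xi i = 0" using p pe by (simp add: lattice_pts_def)
    have le: "\<bar>t\<bar> + (\<Sum>i=1..N. \<bar>xi i\<bar>) \<le> 1" using p pe by (simp add: pt_norm_def)
    have s0: "(\<Sum>i=1..N. \<bar>xi i\<bar>) \<ge> 0" by (simp add: sum_nonneg)
    have "\<bar>t\<bar> \<le> 1" using le s0 by linarith
    then have t: "t \<in> {-1..1}" by auto
    have xi: "\<bar>xi i\<bar> \<le> 1" if "i \<in> {1..N}" for i
    proof -
      have "\<bar>xi i\<bar> \<le> (\<Sum>i=1..N. \<bar>xi i\<bar>)"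
        by (rule member_le_sum) (use that in auto)
      then show ?thesis using le by auto
    qed
    have "restrict xi {1..N} \<in> PiE {1..N} (\<lambda>_. {-1..1})"
      using xi by (auto simp: abs_le_iff)
    moreover have "?f (t, restrict xi {1..N}) = p"
      using pe z by (auto simp: fun_eq_iff)
    ultimately show "p \<in> ?f ` ({-1..1} \<times> (PiE {1..N} (\<lambda>_. {-1..1})))"
      using t by force
  qed
  moreover have "finite (?f ` ({-1..1} \<times> (PiE {1..N} (\<lambda>_. {-1..1::int}))))"
    by (intro finite_imageI finite_cartesian_product finite_PiE) auto
  ultimately show ?thesis by (rule finite_subset)
qed

lemma M_inf_sub: "M_inf N \<alpha> \<subseteq> closure (lattice_grp N \<alpha>)"
proof
  fix lam assume lam: "lam \<in> M_inf N \<alpha>"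
  show "lam \<in> closure (lattice_grp N \<alpha>)"
    unfolding closure_approachable
  proof (intro allI impI)
    fix e :: real assume e: "e > 0"
    obtain n where n: "inverse (real (Suc n)) < e" using reals_Archimedean e by blast
    let ?j = "Suc n"
    have "lam \<in> M_set N \<alpha> ?j" using lam unfolding M_inf_def by auto
    then obtain p where p: "p \<in> lattice_pts N" "pt_norm N p > 1"
      and lt: "norm (rho N \<alpha> lam p) < real_of_int (pt_norm N p) powr (- real ?j)"
      unfolding M_set_def by auto
    define x where "x = real_of_int (pt_norm N p)"
    have x2: "x \<ge> 2" using p(2) unfolding x_def by linarith
    have xp: "x powr real ?j = x ^ ?j" using x2 by (intro powr_realpow) auto
    have "x powr (- real ?j) = inverse (x ^ ?j)" by (simp only: powr_minus xp)
    also have "\<dots> \<le> inverse (2 ^ ?j)"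
      using x2 by (intro le_imp_inverse_le power_mono) auto
    also have "\<dots> < inverse (real ?j)"
    proof -
      have "real ?j < 2 ^ ?j"
        by (metis of_nat_less_numeral_power_cancel_iff less_exp)
      then show ?thesis by (intro less_imp_inverse_less) auto
    qed
    finally have "norm (vval N \<alpha> p - lam) < e"
      using lt n unfolding x_def rho_vval by linarith
    then show "\<exists>g\<in>lattice_grp N \<alpha>. dist g lam < e"
      using vval_in_grp by (metis dist_norm)
  qed
qed

lemma M_set_open: "open (M_set N \<alpha> j)"
  unfolding M_set_def rho_def
  by (intro open_UN ballI open_Collect_less continuous_intros)

lemma M_set_dense:
  assumes G: "closure (lattice_grp N \<alpha>) = UNIV"
  shows "closure (M_set N \<alpha> j) = UNIV"
proof -
  let ?P = "{p \<in> lattice_pts N. pt_norm N p \<le> 1}"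
  define F where "F = vval N \<alpha> ` ?P"
  have fF: "finite F" unfolding F_def using small_finite by blast
  have "z \<in> closure (M_set N \<alpha> j)" for z
    unfolding closure_approachable
  proof (intro allI impI)
    fix e :: real assume e: "e > 0"
    let ?U = "ball z e - F"
    have oU: "open ?U" using fF by (intro open_Diff finite_imp_closed) auto
    have "?U \<noteq> {}"
    proof
      assume "?U = {}"
      then have "ball z e \<subseteq> F" by auto
      then have "finite (ball z e)" using fF finite_subset by blast
      then have "ball z e = {}" using finite_imp_not_open by blast
      then show False using e by auto
    qed
    then have "?U \<inter> lattice_grp N \<alpha> \<noteq> {}"
      using open_Int_closure_eq_empty[OF oU, of "lattice_grp N \<alpha>"] G by auto
    then obtain g where g: "g \<in> ball z e" "g \<notin> F" "g \<in> lattice_grp N \<alpha>" by auto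
    then obtain t xi where gt: "g = of_int t + (\<Sum>i=1..N. \<alpha> i * of_int (xi i))"
      unfolding lattice_grp_def by auto
    define p where "p = (t, \<lambda>i. if i \<in> {1..N} then xi i else 0)"
    have pl: "p \<in> lattice_pts N" unfolding p_def lattice_pts_def by auto
    have vp: "vval N \<alpha> p = g" unfolding gt p_def vval_def by (auto intro: sum.cong)
    have pn: "pt_norm N p > 1"
    proof (rule ccontr)
      assume "\<not> pt_norm N p > 1"
      then have "p \<in> ?P" using pl by auto
      then have "g \<in> F" unfolding F_def using vp by blast
      then show False using g by auto
    qed
    have "norm (rho N \<alpha> g p) < real_of_int (pt_norm N p) powr (- real j)"
      using pn vp by (simp add: rho_vval)
    then have "g \<in> M_set N \<alpha> j"
      unfolding M_set_def using pl pn by blast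
    moreover have "dist g z < e" using g(1) by (simp add: dist_commute)
    ultimately show "\<exists>y\<in>M_set N \<alpha> j. dist y z < e" by blast
  qed
  then show ?thesis by auto
qed

theorem lemma2:
  fixes N :: nat and \<alpha> :: "nat \<Rightarrow> complex"
  assumes "N \<ge> 2"
  shows "closure (M_inf N \<alpha>) = UNIV \<longleftrightarrow> closure (lattice_grp N \<alpha>) = UNIV"
proof
  assume "closure (M_inf N \<alpha>) = UNIV"
  moreover have "closure (M_inf N \<alpha>) \<subseteq> closure (lattice_grp N \<alpha>)"
    using M_inf_sub closure_minimal closed_closure by blast
  ultimately show "closure (lattice_grp N \<alpha>) = UNIV" by auto
next
  assume G: "closure (lattice_grp N \<alpha>) = UNIV"
  have "(UNIV::complex set) \<subseteq> closure (\<Inter>(M_set N \<alpha> ` {1..}))"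
  proof (rule Baire)
    show "closed (UNIV::complex set)" by simp
    show "countable (M_set N \<alpha> ` {1..})" by simp
    fix T assume "T \<in> M_set N \<alpha> ` {1..}"
    then obtain j where "T = M_set N \<alpha> j" by auto
    then show "openin (top_of_set UNIV) T \<and> UNIV \<subseteq> closure T"
      using M_set_open M_set_dense[OF G] by auto
  qed
  then show "closure (M_inf N \<alpha>) = UNIV" unfolding M_inf_def by auto
qed

end
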